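(* Let $S=(s_{ij})$ and $C=(c_{ij})$ be real $n\times n$ matrices with spectra (counted with multiplicities) $\sigma(S)=(\lambda_1,\ldots,\lambda_n)$ and $\sigma(C)=(\mu_1,\ldots,\mu_n)$, and let $0\le\gamma\le 1$. Suppose $|c_{ij}|\le s_{ij}$ for all $1\le i,j\le n$ (equivalently, $S$, $S+C$ and $S-C$ are entrywise nonnegative). Then $\tfrac12(S+\gamma C)$ and $\tfrac12(S-\gamma C)$ are nonnegative, and the $2n\times 2n$ block matrices $M_{\pm\gamma}=(M_{ij,\pm\gamma})_{i,j=1}^n$ with $$M_{ij,\pm\gamma}=\begin{pmatrix}\frac{s_{ij}\pm\gamma c_{ij}}{2} & \frac{s_{ij}\mp\gamma c_{ij}}{2}\\ \frac{s_{ij}\mp\gamma c_{ij}}{2} & \frac{s_{ij}\pm\gamma c_{ij}}{2}\end{pmatrix}$$ are nonnegative and realize, respectively, the lists $(\lambda_1,\ldots,\lambda_n,\gamma\mu_1,\ldots,\gamma\mu_n)$ (for $M_{+\gamma}$) and $(\lambda_1,\ldots,\lambda_n,-\gamma\mu_1,\ldots,-\gamma\mu_n)$ (for $M_{-\gamma}$).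
   Context: A matrix realizes a list of complex numbers if the list is its spectrum counted with multiplicities. Nonnegative means entrywise nonnegative. *)

theory Defs
  imports "Jordan_Normal_Form.Char_Poly"
begin

definition nonneg_mat :: "real mat \<Rightarrow> bool" where
  "nonneg_mat A \<longleftrightarrow> (\<forall>i<dim_row A. \<forall>j<dim_col A. A $$ (i,j) \<ge> 0)"

definition realizes :: "real mat \<Rightarrow> complex list \<Rightarrow> bool" where
  "realizes A ls \<longleftrightarrow> A \<in> carrier_mat (length ls) (length ls) \<and>
     char_poly (map_mat complex_of_real A) = (\<Prod>a\<leftarrow>ls. [:- a, 1:])"

text \<open>Row/column index p corresponds to block p div 2, position p mod 2 inside the block.
  M_{+gamma} = block_mat S C gamma, M_{-gamma} = block_mat S C (-gamma).\<close>
definition block_mat :: "real mat \<Rightarrow> real mat \<Rightarrow> real \<Rightarrow> real mat" where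
  "block_mat S C g = mat (2 * dim_row S) (2 * dim_row S) (\<lambda>(p,q).
     (if p mod 2 = q mod 2
      then (S $$ (p div 2, q div 2) + g * C $$ (p div 2, q div 2)) / 2
      else (S $$ (p div 2, q div 2) - g * C $$ (p div 2, q div 2)) / 2))"

end

theory Submission imports Defs "Jordan_Normal_Form.Schur_Decomposition" begin

lemma sum_pairs: "(\<Sum>r\<in>{0..<2*n}. f r) = (\<Sum>j<n. f (2*j) + f (2*j+1::nat)) " for f :: "nat \<Rightarrow> 'a::comm_monoid_add"
proof (induct n)
  case (Suc n)
  have e: "{0..<2*Suc n} = insert (Suc (2*n)) (insert (2*n) {0..<2*n})" by auto
  show ?case unfolding e using Suc by (simp add: ac_simps)
qed simp

lemma sum_split: "(\<Sum>r\<in>{0..<2*n}. f r) = (\<Sum>j<n. f j + f (n + j::nat)) " for f :: "nat \<Rightarrow> 'a::comm_monoid_add"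
proof -
  have "{0..<2*n} = {0..<n} \<union> {n..<n+n}" by auto
  hence "(\<Sum>r\<in>{0..<2*n}. f r) = (\<Sum>r\<in>{0..<n}. f r) + (\<Sum>r\<in>{n..<n+n}. f r)"
    by (simp add: sum.union_disjoint ivl_disj_int)
  also have "(\<Sum>r\<in>{n..<n+n}. f r) = (\<Sum>j<n. f (n+j))"
    using sum.shift_bounds_nat_ivl[of f 0 n n] by (simp add: atLeast0LessThan add.commute)
  finally show ?thesis by (simp add: sum.distrib atLeast0LessThan)
qed

definition pe :: "nat \<Rightarrow> nat \<Rightarrow> nat \<Rightarrow> real" where
  "pe n p q = (if q < n then (if p div 2 = q then 1 else 0)
     else (if p div 2 = q - n then (if even p then 1 else -1) else 0))"

definition Pm :: "nat \<Rightarrow> real mat" where "Pm n = mat (2*n) (2*n) (\<lambda>(p,q). pe n p q)"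
definition Qm :: "nat \<Rightarrow> real mat" where "Qm n = mat (2*n) (2*n) (\<lambda>(q,p). pe n p q / 2)"

lemma pe_lo: "j < n \<Longrightarrow> pe n p j = (if p div 2 = j then 1 else 0)"
  by (simp add: pe_def)
lemma pe_hi: "pe n p (n+j) = (if p div 2 = j then (if even p then 1 else -1) else 0)"
  by (simp add: pe_def)
lemma pe_ev: "pe n (2*j) q = (if q < n then (if j = q then 1 else 0) else (if j = q - n then 1 else 0))"
  by (simp add: pe_def)
lemma pe_od: "pe n (2*j+1) q = (if q < n then (if j = q then 1 else 0) else (if j = q - n then -1 else 0))"
  by (simp add: pe_def)
lemma eq_div_mod: "(p::nat) = p' \<longleftrightarrow> p div 2 = p' div 2 \<and> (even p \<longleftrightarrow> even p')"
  by (metis div_mult_mod_eq odd_iff_mod_2_eq_one even_iff_mod_2_eq_zero)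

lemma PQ: "Pm n * Qm n = 1\<^sub>m (2*n)"
proof (rule eq_matI)
  fix p p' assume p: "p < dim_row (1\<^sub>m (2*n))" and p': "p' < dim_col (1\<^sub>m (2*n))"
  hence pn: "p div 2 < n" "p' div 2 < n" by auto
  have "(Pm n * Qm n) $$ (p,p') = (\<Sum>r\<in>{0..<2*n}. pe n p r * (pe n p' r / 2))"
    using p p' by (simp add: Pm_def Qm_def scalar_prod_def)
  also have "\<dots> = (\<Sum>j<n. pe n p j * (pe n p' j / 2) + pe n p (n+j) * (pe n p' (n+j) / 2))"
    by (rule sum_split)
  also have "\<dots> = (\<Sum>j<n. if j = p div 2 then (if p = p' then 1 else 0) else 0)"
  proof (rule sum.cong[OF refl])
    fix j assume "j \<in> {..<n}"
    then show "pe n p j * (pe n p' j / 2) + pe n p (n+j) * (pe n p' (n+j) / 2) =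
       (if j = p div 2 then (if p = p' then 1 else 0) else 0)"
      unfolding pe_lo[OF \<open>j \<in> {..<n}\<close>[simplified]] pe_hi eq_div_mod[of p p'] by auto
  qed
  also have "\<dots> = 1\<^sub>m (2*n) $$ (p,p')" using pn p p' by simp
  finally show "(Pm n * Qm n) $$ (p,p') = 1\<^sub>m (2*n) $$ (p,p')" .
qed (auto simp: Pm_def Qm_def)

lemma QP: "Qm n * Pm n = 1\<^sub>m (2*n)"
proof (rule eq_matI)
  fix q q' assume q: "q < dim_row (1\<^sub>m (2*n))" and q': "q' < dim_col (1\<^sub>m (2*n))"
  have "(Qm n * Pm n) $$ (q,q') = (\<Sum>r\<in>{0..<2*n}. pe n r q / 2 * pe n r q')"
    using q q' by (simp add: Pm_def Qm_def scalar_prod_def)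
  also have "\<dots> = (\<Sum>j<n. pe n (2*j) q / 2 * pe n (2*j) q' + pe n (2*j+1) q / 2 * pe n (2*j+1) q')"
    by (rule sum_pairs)
  also have "\<dots> = (\<Sum>j<n. if j = (if q < n then q else q - n) then (if q = q' then 1 else 0) else 0)"
  proof (rule sum.cong[OF refl])
    fix j assume "j \<in> {..<n}"
    then show "pe n (2*j) q / 2 * pe n (2*j) q' + pe n (2*j+1) q / 2 * pe n (2*j+1) q' =
       (if j = (if q < n then q else q - n) then (if q = q' then 1 else 0) else 0)"
      unfolding pe_ev pe_od using q q' by (cases "q < n"; cases "q' < n"; auto)
  qed
  also have "\<dots> = 1\<^sub>m (2*n) $$ (q,q')" using q q' by (cases "q < n") auto
  finally show "(Qm n * Pm n) $$ (q,q') = 1\<^sub>m (2*n) $$ (q,q')" .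
qed (auto simp: Pm_def Qm_def)

definition Dm :: "real mat \<Rightarrow> real mat \<Rightarrow> real \<Rightarrow> nat \<Rightarrow> real mat" where
  "Dm S C k n = four_block_mat S (0\<^sub>m n n) (0\<^sub>m n n) (k \<cdot>\<^sub>m C)"

lemma MP: assumes S: "S \<in> carrier_mat n n" and C: "C \<in> carrier_mat n n"
  shows "block_mat S C k * Pm n = Pm n * Dm S C k n"
proof (rule eq_matI)
  have dS: "dim_row S = n" using S by auto
  fix p q assume p: "p < dim_row (Pm n * Dm S C k n)" and q: "q < dim_col (Pm n * Dm S C k n)"
  hence p2: "p < 2*n" and q2: "q < 2*n" using S C by (auto simp: Pm_def Dm_def)
  hence pn: "p div 2 < n" by auto
  define qq where "qq = (if q < n then q else q - n)"
  define val where "val = (if q < n then S $$ (p div 2, q) else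
     (if even p then k * C $$ (p div 2, q - n) else - (k * C $$ (p div 2, q - n))))"
  have "(block_mat S C k * Pm n) $$ (p,q) = (\<Sum>r\<in>{0..<2*n}. block_mat S C k $$ (p,r) * pe n r q)"
    using p2 q2 by (simp add: Pm_def block_mat_def dS scalar_prod_def)
  also have "\<dots> = (\<Sum>j<n. block_mat S C k $$ (p,2*j) * pe n (2*j) q + block_mat S C k $$ (p,2*j+1) * pe n (2*j+1) q)"
    by (rule sum_pairs)
  also have "\<dots> = (\<Sum>j<n. if j = qq then val else 0)"
  proof (rule sum.cong[OF refl])
    fix j assume j: "j \<in> {..<n}"
    have b0: "block_mat S C k $$ (p,2*j) = (if even p then (S $$ (p div 2, j) + k * C $$ (p div 2, j)) / 2
       else (S $$ (p div 2, j) - k * C $$ (p div 2, j)) / 2)"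
      using j p2 by (auto simp: block_mat_def dS)
    have b1: "block_mat S C k $$ (p,2*j+1) = (if odd p then (S $$ (p div 2, j) + k * C $$ (p div 2, j)) / 2
       else (S $$ (p div 2, j) - k * C $$ (p div 2, j)) / 2)"
      using j p2 by (auto simp: block_mat_def dS)
    show "block_mat S C k $$ (p,2*j) * pe n (2*j) q + block_mat S C k $$ (p,2*j+1) * pe n (2*j+1) q
       = (if j = qq then val else 0)"
      unfolding b0 b1 pe_ev pe_od qq_def val_def using q2 j
      by (cases "q < n"; cases "even p"; auto simp: field_simps)
  qed
  also have "\<dots> = val" using q2 by (cases "q < n") (auto simp: qq_def)
  also have "val = (\<Sum>j<n. if j = p div 2 then val else 0)" using pn by simp
  also have "\<dots> = (\<Sum>j<n. pe n p j * Dm S C k n $$ (j,q) + pe n p (n+j) * Dm S C k n $$ (n+j,q))"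
  proof (rule sum.cong[OF refl])
    fix j assume j: "j \<in> {..<n}"
    have d0: "Dm S C k n $$ (j,q) = (if q < n then S $$ (j,q) else 0)"
      using j q2 S C by (auto simp: Dm_def)
    have d1: "Dm S C k n $$ (n+j,q) = (if q < n then 0 else k * C $$ (j,q-n))"
      using j q2 S C by (auto simp: Dm_def)
    show "(if j = p div 2 then val else 0) = pe n p j * Dm S C k n $$ (j,q) + pe n p (n+j) * Dm S C k n $$ (n+j,q)"
      unfolding d0 d1 pe_lo[OF j[simplified]] pe_hi val_def by auto
  qed
  also have "\<dots> = (\<Sum>r\<in>{0..<2*n}. pe n p r * Dm S C k n $$ (r,q))"
    by (rule sum_split[symmetric])
  also have "\<dots> = (Pm n * Dm S C k n) $$ (p,q)"
  proof -
    have dr: "dim_row (Dm S C k n) = 2*n" and dc: "dim_col (Dm S C k n) = 2*n"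
      using S C by (auto simp: Dm_def)
    show ?thesis using p2 q2 by (simp add: Pm_def dr dc scalar_prod_def)
  qed
  finally show "(block_mat S C k * Pm n) $$ (p,q) = (Pm n * Dm S C k n) $$ (p,q)" .
qed (insert S C, auto simp: Pm_def Dm_def block_mat_def)

lemma sim_block: assumes S: "S \<in> carrier_mat n n" and C: "C \<in> carrier_mat n n"
  shows "char_poly (block_mat S C k) = char_poly (Dm S C k n)"
proof -
  have B: "block_mat S C k \<in> carrier_mat (2*n) (2*n)" using S by (auto simp: block_mat_def)
  have D: "Dm S C k n \<in> carrier_mat (2*n) (2*n)" using S C by (auto simp: Dm_def)
  have P: "Pm n \<in> carrier_mat (2*n) (2*n)" and Q: "Qm n \<in> carrier_mat (2*n) (2*n)"
    by (auto simp: Pm_def Qm_def)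
  have "block_mat S C k = block_mat S C k * (Pm n * Qm n)" using B by (simp add: PQ)
  also have "\<dots> = (block_mat S C k * Pm n) * Qm n" using B P Q by (simp add: assoc_mult_mat)
  also have "\<dots> = Pm n * Dm S C k n * Qm n" by (simp add: MP[OF S C])
  finally have "similar_mat (block_mat S C k) (Dm S C k n)"
    by (intro similar_matI[OF _ PQ QP]) (insert B D P Q, auto)
  then show ?thesis by (rule char_poly_similar)
qed

lemma char_poly_smult_lin: fixes A :: "complex mat"
  assumes A: "A \<in> carrier_mat n n" and cA: "char_poly A = (\<Prod>a\<leftarrow>es. [:- a, 1:])"
  shows "char_poly (c \<cdot>\<^sub>m A) = (\<Prod>a\<leftarrow>es. [:- (c * a), 1:])"
proof -
  obtain B P Q where sd: "schur_decomposition A es = (B,P,Q)" by (cases "schur_decomposition A es") auto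
  from schur_decomposition[OF A cA sd] have w: "similar_mat_wit A B P Q"
    and ut: "upper_triangular B" and dB: "diag_mat B = es" by auto
  from similar_mat_witD2[OF A w] have Bc: "B \<in> carrier_mat n n" by auto
  have "similar_mat (c \<cdot>\<^sub>m A) (c \<cdot>\<^sub>m B)"
    using similar_mat_wit_smult[OF w] unfolding similar_mat_def by blast
  hence "char_poly (c \<cdot>\<^sub>m A) = char_poly (c \<cdot>\<^sub>m B)" by (rule char_poly_similar)
  also have "\<dots> = (\<Prod>a\<leftarrow>diag_mat (c \<cdot>\<^sub>m B). [:- a, 1:])"
    by (rule char_poly_upper_triangular[of _ n]) (insert Bc ut, auto simp: upper_triangular_def)
  also have "diag_mat (c \<cdot>\<^sub>m B) = map (\<lambda>a. c * a) es"
    unfolding dB[symmetric] diag_mat_def using Bc by auto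
  finally show ?thesis by (simp add: o_def)
qed

lemma realizes_block: assumes S: "S \<in> carrier_mat n n" and C: "C \<in> carrier_mat n n"
  and rS: "realizes S lams" and rC: "realizes C mus"
  shows "realizes (block_mat S C k) (lams @ map (\<lambda>m. complex_of_real k * m) mus)"
proof -
  let ?h = "map_mat complex_of_real"
  have ln: "length lams = n" "length mus = n" using rS rC S C unfolding realizes_def by auto
  have B: "block_mat S C k \<in> carrier_mat (2*n) (2*n)" using S by (auto simp: block_mat_def)
  have D: "Dm S C k n \<in> carrier_mat (2*n) (2*n)" using S C by (auto simp: Dm_def)
  have "char_poly (?h (block_mat S C k)) = map_poly complex_of_real (char_poly (block_mat S C k))"
    by (rule of_real_hom.char_poly_hom[OF B])
  also have "\<dots> = map_poly complex_of_real (char_poly (Dm S C k n))" by (simp add: sim_block[OF S C])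
  also have "\<dots> = char_poly (?h (Dm S C k n))"
    by (rule of_real_hom.char_poly_hom[OF D, symmetric])
  also have "?h (Dm S C k n) = four_block_mat (?h S) (0\<^sub>m n n) (0\<^sub>m n n) (complex_of_real k \<cdot>\<^sub>m ?h C)"
    by (rule eq_matI) (insert S C, auto simp: Dm_def)
  also have "char_poly \<dots> = char_poly (?h S) * char_poly (complex_of_real k \<cdot>\<^sub>m ?h C)"
  proof (rule char_poly_0_block[OF refl])
    show "\<exists>es. char_poly (?h S) = (\<Prod>a\<leftarrow>es. [:- a, 1:])"
      using char_poly_factorized[of "?h S" n] S by auto
    show "\<exists>es. char_poly (complex_of_real k \<cdot>\<^sub>m ?h C) = (\<Prod>a\<leftarrow>es. [:- a, 1:])"
      using char_poly_factorized[of "complex_of_real k \<cdot>\<^sub>m ?h C" n] C by auto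
  qed (insert S C, auto)
  also have "char_poly (?h S) = (\<Prod>a\<leftarrow>lams. [:- a, 1:])" using rS unfolding realizes_def by auto
  also have "char_poly (complex_of_real k \<cdot>\<^sub>m ?h C) = (\<Prod>a\<leftarrow>mus. [:- (complex_of_real k * a), 1:])"
    by (rule char_poly_smult_lin[of _ n]) (insert rC C, auto simp: realizes_def)
  moreover have "block_mat S C k \<in> carrier_mat (n + n) (n + n)" using B by (simp add: mult_2)
  ultimately show ?thesis unfolding realizes_def using ln by (simp add: o_def)
qed

theorem theorem3:
  fixes S C :: "real mat" and n :: nat and g :: real
    and lams mus :: "complex list"
  assumes "S \<in> carrier_mat n n" and "C \<in> carrier_mat n n"
    and "realizes S lams" and "realizes C mus"
    and "0 \<le> g" and "g \<le> 1"
    and "\<forall>i<n. \<forall>j<n. \<bar>C $$ (i,j)\<bar> \<le> S $$ (i,j)"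
  shows "nonneg_mat ((1/2) \<cdot>\<^sub>m (S + g \<cdot>\<^sub>m C))
       \<and> nonneg_mat ((1/2) \<cdot>\<^sub>m (S - g \<cdot>\<^sub>m C))
       \<and> nonneg_mat (block_mat S C g)
       \<and> nonneg_mat (block_mat S C (- g))
       \<and> realizes (block_mat S C g) (lams @ map (\<lambda>m. complex_of_real g * m) mus)
       \<and> realizes (block_mat S C (- g)) (lams @ map (\<lambda>m. - complex_of_real g * m) mus)"
proof -
  have key: "0 \<le> S $$ (i,j) + g * C $$ (i,j) \<and> 0 \<le> S $$ (i,j) - g * C $$ (i,j)" if "i < n" "j < n" for i j
  proof -
    have a: "\<bar>C $$ (i,j)\<bar> \<le> S $$ (i,j)" using assms(7) that by auto
    have "\<bar>g * C $$ (i,j)\<bar> \<le> \<bar>C $$ (i,j)\<bar>" using assms(5,6)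
      by (simp add: abs_mult mult_left_le_one_le)
    with a show ?thesis by linarith
  qed
  have S: "S \<in> carrier_mat n n" and C: "C \<in> carrier_mat n n" by fact+
  have dS: "dim_row S = n" using S by auto
  have n1: "nonneg_mat ((1/2) \<cdot>\<^sub>m (S + g \<cdot>\<^sub>m C))"
    unfolding nonneg_mat_def using S C key by auto
  have n2: "nonneg_mat ((1/2) \<cdot>\<^sub>m (S - g \<cdot>\<^sub>m C))"
    unfolding nonneg_mat_def using S C key by auto
  have n3: "nonneg_mat (block_mat S C g)"
    unfolding nonneg_mat_def block_mat_def dS using key by (auto simp: less_mult_imp_div_less)
  have n4: "nonneg_mat (block_mat S C (- g))"
    unfolding nonneg_mat_def block_mat_def dS using key by (auto simp: less_mult_imp_div_less)
  have r1: "realizes (block_mat S C g) (lams @ map (\<lambda>m. complex_of_real g * m) mus)"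
    by (rule realizes_block[OF S C assms(3,4)])
  have r2: "realizes (block_mat S C (- g)) (lams @ map (\<lambda>m. - complex_of_real g * m) mus)"
    using realizes_block[OF S C assms(3,4), of "- g"] by simp
  show ?thesis using n1 n2 n3 n4 r1 r2 by blast
qed

end
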